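(* Let $k<n$ and let $A_1,\ldots,A_k$ be $n\times n$ ASMs, $A_s=[a_{ijs}]$, such that for all $1\le i,j\le n$ the vector $(a_{ij1},\ldots,a_{ijk})$ is $(1,* )$-alternating. Then there exist $n\times n$ permutation matrices $A_{k+1},\ldots,A_n$ such that $[A_1,\ldots,A_k,A_{k+1},\ldots,A_n]$ is an $n\times n\times n$ ASHM.
   Context: An $n\times n$ alternating sign matrix (ASM) is an $n\times n$ matrix with entries in $\{0,1,-1\}$ such that in every row and column the nonzeros alternate in sign, beginning and ending with $+1$. An $n\times n\times n$ hypermatrix $[A_1,\ldots,A_n]$ with $A_s=[a_{ijs}]_{i,j}$ is an ASHM if all entries are in $\{0,\pm1\}$ and in every line (obtained by fixing two of the three indices) the nonzeros alternate in sign beginning and ending with $+1$. A $(0,\pm1)$-vector is $(1,* )$-alternating if its nonzeros (if any) alternate in sign and the first nonzero is $1$ (the zero vector qualifies). *)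

theory Defs
  imports "HOL-Combinatorics.Permutations"
begin

text \<open>Indices run over 1..n. A vector is represented by the list of its entries.\<close>

definition sign_entries :: "int list \<Rightarrow> bool" where
  "sign_entries xs \<longleftrightarrow> (\<forall>x\<in>set xs. x \<in> {-1, 0, 1})"

definition one_star_alt :: "int list \<Rightarrow> bool" where
  "one_star_alt xs \<longleftrightarrow> sign_entries xs \<and>
     (let ys = filter (\<lambda>x. x \<noteq> 0) xs in \<forall>i<length ys. ys ! i = (-1) ^ i)"

definition alt_sign_vec :: "int list \<Rightarrow> bool" where
  "alt_sign_vec xs \<longleftrightarrow> one_star_alt xs \<and>
     (let ys = filter (\<lambda>x. x \<noteq> 0) xs in ys \<noteq> [] \<and> last ys = 1)"

definition row :: "(nat \<Rightarrow> nat \<Rightarrow> int) \<Rightarrow> nat \<Rightarrow> nat \<Rightarrow> int list" where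
  "row M n i = map (\<lambda>j. M i j) [1..<n+1]"

definition col :: "(nat \<Rightarrow> nat \<Rightarrow> int) \<Rightarrow> nat \<Rightarrow> nat \<Rightarrow> int list" where
  "col M n j = map (\<lambda>i. M i j) [1..<n+1]"

definition is_ASM :: "nat \<Rightarrow> (nat \<Rightarrow> nat \<Rightarrow> int) \<Rightarrow> bool" where
  "is_ASM n M \<longleftrightarrow> (\<forall>i\<in>{1..n}. alt_sign_vec (row M n i)) \<and> (\<forall>j\<in>{1..n}. alt_sign_vec (col M n j))"

definition is_perm_matrix :: "nat \<Rightarrow> (nat \<Rightarrow> nat \<Rightarrow> int) \<Rightarrow> bool" where
  "is_perm_matrix n M \<longleftrightarrow> (\<exists>\<sigma>. \<sigma> permutes {1..n} \<and>
      (\<forall>i\<in>{1..n}. \<forall>j\<in>{1..n}. M i j = (if \<sigma> i = j then 1 else 0)))"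

text \<open>Hypermatrix [A_1,...,A_n] given by H s i j = a_{ijs}; a line fixes two of the three indices.\<close>
definition is_ASHM :: "nat \<Rightarrow> (nat \<Rightarrow> nat \<Rightarrow> nat \<Rightarrow> int) \<Rightarrow> bool" where
  "is_ASHM n H \<longleftrightarrow>
     (\<forall>i\<in>{1..n}. \<forall>j\<in>{1..n}. alt_sign_vec (map (\<lambda>s. H s i j) [1..<n+1])) \<and>
     (\<forall>i\<in>{1..n}. \<forall>s\<in>{1..n}. alt_sign_vec (map (\<lambda>j. H s i j) [1..<n+1])) \<and>
     (\<forall>j\<in>{1..n}. \<forall>s\<in>{1..n}. alt_sign_vec (map (\<lambda>i. H s i j) [1..<n+1]))"

end

theory Submission
  imports Defs
begin


lemma hall:
  fixes S :: "'a \<Rightarrow> 'b set"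
  assumes "finite I" "\<forall>i\<in>I. finite (S i)" "\<forall>J\<subseteq>I. card J \<le> card (\<Union>(S ` J))"
  shows "\<exists>f. inj_on f I \<and> (\<forall>i\<in>I. f i \<in> S i)"
  using assms
proof (induction "sum (\<lambda>i. card (S i)) I" arbitrary: S rule: less_induct)
  case less
  show ?case
  proof (cases "\<exists>i\<in>I. 2 \<le> card (S i)")
    case False
    have one: "card (S i) = 1" if i: "i\<in>I" for i
    proof -
      have "card {i} \<le> card (\<Union>(S ` {i}))" using less.prems(3) i by blast
      then show "card (S i) = 1" using False i by force
    qed
    define f where "f i = the_elem (S i)" for i
    have fS: "\<forall>i\<in>I. S i = {f i}" using one by (metis card_1_singleton_iff One_nat_def f_def the_elem_eq)
    have "inj_on f I"
    proof (rule inj_onI)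
      fix i j assume ij: "i\<in>I" "j\<in>I" "f i = f j"
      show "i = j"
      proof (rule ccontr)
        assume "i\<noteq>j"
        have "{i,j} \<subseteq> I" using ij by auto
        then have "card {i,j} \<le> card (\<Union>(S ` {i,j}))" using less.prems(3) by blast
        then show False using fS ij \<open>i\<noteq>j\<close> by simp
      qed
    qed
    then show ?thesis using fS by auto
  next
    case True
    then obtain i where i: "i\<in>I" "2 \<le> card (S i)" by auto
    then obtain x1 x2 where x: "x1 \<in> S i" "x2 \<in> S i" "x1 \<noteq> x2"
    proof -
      have "finite (S i)" using less.prems(2) i by auto
      moreover have "\<not> card (S i) \<le> Suc 0" using i by simp
      ultimately show ?thesis using that card_le_Suc0_iff_eq by blast
    qed
    define S1 where "S1 = S(i := S i - {x1})"
    define S2 where "S2 = S(i := S i - {x2})"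
    define U where "U K = \<Union>(S ` K)" for K
    have finU: "finite (U K)" if "K \<subseteq> I" for K
      using that less.prems(1,2) by (auto simp: U_def intro: finite_subset)
    have bad: "i \<in> J \<and> card (U (J - {i}) \<union> (S i - {x})) \<le> card (J - {i})"
      if J: "J \<subseteq> I" "card (\<Union>((S(i := S i - {x})) ` J)) < card J" for J x
    proof -
      have iJ: "i \<in> J"
      proof (rule ccontr)
        assume "i \<notin> J"
        then have "(S(i := S i - {x})) ` J = S ` J" by auto
        then show False using J less.prems(3) by (metis not_le)
      qed
      have "\<Union>((S(i := S i - {x})) ` J) = U (J - {i}) \<union> (S i - {x})"
        using iJ by (auto simp: U_def)
      moreover have "card J = card (J - {i}) + 1"
        using iJ J(1) less.prems(1) by (metis add.commute card_Suc_Diff1 finite_subset plus_1_eq_Suc)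
      ultimately show ?thesis using iJ J by simp
    qed
    have hall_or: "(\<forall>J\<subseteq>I. card J \<le> card (\<Union>(S1 ` J))) \<or> (\<forall>J\<subseteq>I. card J \<le> card (\<Union>(S2 ` J)))"
    proof (rule ccontr)
      assume "\<not> ?thesis"
      then obtain J1 J2 where J1: "J1 \<subseteq> I" "card (\<Union>(S1 ` J1)) < card J1"
        and J2: "J2 \<subseteq> I" "card (\<Union>(S2 ` J2)) < card J2" by (auto simp: not_le)
      define K1 where "K1 = J1 - {i}"
      define K2 where "K2 = J2 - {i}"
      have b1: "card (U K1 \<union> (S i - {x1})) \<le> card K1" using bad[OF J1[unfolded S1_def]] unfolding K1_def by blast
      have b2: "card (U K2 \<union> (S i - {x2})) \<le> card K2" using bad[OF J2[unfolded S2_def]] unfolding K2_def by blast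
      have KI: "K1 \<subseteq> I" "K2 \<subseteq> I" using J1 J2 K1_def K2_def by auto
      have iK: "i \<notin> K1 \<union> K2" using K1_def K2_def by auto
      have finK: "finite K1" "finite K2" using KI less.prems(1) finite_subset by auto
      have finSi: "finite (S i)" using less.prems(2) i by auto
      define A1 where "A1 = U K1 \<union> (S i - {x1})"
      define A2 where "A2 = U K2 \<union> (S i - {x2})"
      have un: "A1 \<union> A2 = U (insert i (K1 \<union> K2))"
        using x by (auto simp: U_def A1_def A2_def)
      have int: "U (K1 \<inter> K2) \<subseteq> A1 \<inter> A2"
        by (auto simp: U_def A1_def A2_def)
      have h1: "card (insert i (K1 \<union> K2)) \<le> card (U (insert i (K1 \<union> K2)))"
      proof -
        have "insert i (K1 \<union> K2) \<subseteq> I" using KI i by auto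
        then show ?thesis using less.prems(3) unfolding U_def by blast
      qed
      have h2: "card (K1 \<inter> K2) \<le> card (U (K1 \<inter> K2))"
      proof -
        have "K1 \<inter> K2 \<subseteq> I" using KI by auto
        then show ?thesis using less.prems(3) unfolding U_def by blast
      qed
      have f1: "finite A1" "finite A2"
        using finU KI finSi by (auto simp: A1_def A2_def)
      have c3: "card (U (K1 \<inter> K2)) \<le> card (A1 \<inter> A2)"
        by (rule card_mono[OF _ int]) (use f1 in blast)
      have c4: "card A1 + card A2 = card (A1 \<union> A2) + card (A1 \<inter> A2)"
        by (rule card_Un_Int[OF f1])
      have c5: "card K1 + card K2 = card (K1 \<union> K2) + card (K1 \<inter> K2)"
        by (rule card_Un_Int[OF finK])
      have c6: "card (insert i (K1 \<union> K2)) = card (K1 \<union> K2) + 1"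
        using iK finK by simp
      have c7: "card (A1 \<union> A2) = card (U (insert i (K1 \<union> K2)))" by (simp only: un)
      have b1': "card A1 \<le> card K1" using b1 A1_def by simp
      have b2': "card A2 \<le> card K2" using b2 A2_def by simp
      show False using b1' b2' c7 h1 h2 c3 c4 c5 c6 by linarith
    qed
    have step: "\<exists>f. inj_on f I \<and> (\<forall>i\<in>I. f i \<in> S i)"
      if hx: "x \<in> S i" and hh: "\<forall>J\<subseteq>I. card J \<le> card (\<Union>((S(i := S i - {x})) ` J))" for x
    proof -
      let ?T = "S(i := S i - {x})"
      have finSi: "finite (S i)" using less.prems(2) i by auto
      have r1: "sum (\<lambda>j. card (?T j)) I = card (?T i) + sum (\<lambda>j. card (?T j)) (I - {i})"
        by (rule sum.remove[OF less.prems(1) i(1)])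
      have r2: "sum (\<lambda>j. card (?T j)) (I - {i}) = sum (\<lambda>j. card (S j)) (I - {i})"
        by (rule sum.cong) auto
      have r3: "card (?T i) < card (S i)" 
      proof -
        have "0 < card (S i)" using hx finSi card_gt_0_iff by blast
        then show ?thesis using hx finSi by simp
      qed
      have r4: "sum (\<lambda>j. card (S j)) I = card (S i) + sum (\<lambda>j. card (S j)) (I - {i})"
        by (rule sum.remove[OF less.prems(1) i(1)])
      have lt: "sum (\<lambda>j. card (?T j)) I < sum (\<lambda>j. card (S j)) I" using r1 r2 r3 r4 by linarith
      have "\<forall>j\<in>I. finite (?T j)" using less.prems(2) by auto
      then obtain f where "inj_on f I" "\<forall>j\<in>I. f j \<in> ?T j"
        using less.hyps[OF lt] less.prems(1) hh by blast
      then show ?thesis by (metis Diff_iff fun_upd_apply)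
    qed
    show ?thesis using hall_or step x unfolding S1_def S2_def by blast
  qed
qed



lemma regular_perm:
  fixes D :: "'a \<Rightarrow> 'a \<Rightarrow> bool"
  assumes V: "finite V" and m: "0 < m"
    and r: "\<forall>i\<in>V. card {j\<in>V. D i j} = m" and c: "\<forall>j\<in>V. card {i\<in>V. D i j} = m"
  shows "\<exists>\<sigma>. \<sigma> permutes V \<and> (\<forall>i\<in>V. D i (\<sigma> i))"
proof -
  define S where "S i = {j\<in>V. D i j}" for i
  have hc: "\<forall>J\<subseteq>V. card J \<le> card (\<Union>(S ` J))"
  proof (intro allI impI)
    fix J assume J: "J \<subseteq> V"
    define N where "N = \<Union>(S ` J)"
    have finJ: "finite J" using J V finite_subset by auto
    have NV: "N \<subseteq> V" by (auto simp: N_def S_def)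
    have finN: "finite N" using NV V finite_subset by auto
    have e1: "card (SIGMA i:J. S i) = m * card J"
    proof -
      have "card (SIGMA i:J. S i) = (\<Sum>i\<in>J. card (S i))"
        using finJ V by (simp add: S_def)
      also have "\<dots> = (\<Sum>i\<in>J. m)" using r J by (intro sum.cong) (auto simp: S_def)
      finally show ?thesis by simp
    qed
    have e2: "card (SIGMA j:N. {i\<in>V. D i j}) = m * card N"
    proof -
      have "card (SIGMA j:N. {i\<in>V. D i j}) = (\<Sum>j\<in>N. card {i\<in>V. D i j})"
        using finN V by simp
      also have "\<dots> = (\<Sum>j\<in>N. m)" using c NV by (intro sum.cong) auto
      finally show ?thesis by simp
    qed
    have sub: "(SIGMA i:J. S i) \<subseteq> (\<lambda>(j,i). (i,j)) ` (SIGMA j:N. {i\<in>V. D i j})"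
    proof
      fix p assume "p \<in> (SIGMA i:J. S i)"
      then obtain i j where p: "p = (i,j)" "i \<in> J" "j \<in> S i" by auto
      then have "(j,i) \<in> (SIGMA j:N. {i\<in>V. D i j})" using J by (auto simp: N_def S_def)
      then show "p \<in> (\<lambda>(j,i). (i,j)) ` (SIGMA j:N. {i\<in>V. D i j})" using p by force
    qed
    have finS: "finite (SIGMA j:N. {i\<in>V. D i j})" using finN V by auto
    have "m * card J \<le> m * card N"
    proof -
      have "card (SIGMA i:J. S i) \<le> card ((\<lambda>(j,i). (i,j)) ` (SIGMA j:N. {i\<in>V. D i j}))"
        by (rule card_mono[OF _ sub]) (use finS in blast)
      also have "\<dots> \<le> card (SIGMA j:N. {i\<in>V. D i j})" by (rule card_image_le[OF finS])
      finally show ?thesis using e1 e2 by simp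
    qed
    then show "card J \<le> card (\<Union>(S ` J))" using m N_def by simp
  qed
  have "\<forall>i\<in>V. finite (S i)" using V by (auto simp: S_def)
  then obtain f where f: "inj_on f V" "\<forall>i\<in>V. f i \<in> S i" using hall[OF V _ hc] by blast
  have fV: "f ` V \<subseteq> V" using f(2) by (auto simp: S_def)
  have fV2: "f ` V = V" using card_subset_eq[OF V fV] card_image[OF f(1)] by simp
  define \<sigma> where "\<sigma> x = (if x \<in> V then f x else x)" for x
  have "inj_on \<sigma> V" using f(1) by (simp add: inj_on_def \<sigma>_def)
  moreover have "\<sigma> ` V = V" using fV2 by (simp add: \<sigma>_def)
  ultimately have "bij_betw \<sigma> V V" by (simp add: bij_betw_def)
  then have "\<sigma> permutes V" by (rule bij_imp_permutes) (simp add: \<sigma>_def)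
  moreover have "\<forall>i\<in>V. D i (\<sigma> i)" using f(2) by (simp add: \<sigma>_def S_def)
  ultimately show ?thesis by blast
qed

lemma decomp:
  fixes V :: "'a set"
  assumes V: "finite V"
  shows "\<forall>D. (\<forall>i\<in>V. card {j\<in>V. D i j} = m) \<and> (\<forall>j\<in>V. card {i\<in>V. D i j} = m) \<longrightarrow>
    (\<exists>\<sigma>::nat \<Rightarrow> 'a \<Rightarrow> 'a. (\<forall>t<m. \<sigma> t permutes V) \<and>
       (\<forall>i\<in>V. \<forall>j\<in>V. (D i j \<longrightarrow> (\<exists>!t. t<m \<and> \<sigma> t i = j)) \<and> (\<not> D i j \<longrightarrow> (\<forall>t<m. \<sigma> t i \<noteq> j))))"
proof (induction m)
  case 0
  show ?case
  proof (intro allI impI)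
    fix D :: "'a \<Rightarrow> 'a \<Rightarrow> bool"
    assume h: "(\<forall>i\<in>V. card {j\<in>V. D i j} = 0) \<and> (\<forall>j\<in>V. card {i\<in>V. D i j} = 0)"
    have "\<forall>i\<in>V. \<forall>j\<in>V. \<not> D i j"
    proof (intro ballI)
      fix i j assume "i\<in>V" "j\<in>V"
      then have "{j\<in>V. D i j} = {}" using h V by auto
      then show "\<not> D i j" using \<open>j\<in>V\<close> by auto
    qed
    then show "\<exists>\<sigma>::nat \<Rightarrow> 'a \<Rightarrow> 'a. (\<forall>t<0. \<sigma> t permutes V) \<and>
       (\<forall>i\<in>V. \<forall>j\<in>V. (D i j \<longrightarrow> (\<exists>!t. t<0 \<and> \<sigma> t i = j)) \<and> (\<not> D i j \<longrightarrow> (\<forall>t<0. \<sigma> t i \<noteq> j)))"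
      by auto
  qed
next
  case (Suc m)
  show ?case
  proof (intro allI impI)
    fix D :: "'a \<Rightarrow> 'a \<Rightarrow> bool"
    assume h: "(\<forall>i\<in>V. card {j\<in>V. D i j} = Suc m) \<and> (\<forall>j\<in>V. card {i\<in>V. D i j} = Suc m)"
    obtain \<sigma>0 where s0: "\<sigma>0 permutes V" "\<forall>i\<in>V. D i (\<sigma>0 i)"
      using regular_perm[OF V zero_less_Suc[of m], where D=D] h by blast
    define D' where "D' i j = (D i j \<and> \<sigma>0 i \<noteq> j)" for i j
    have r': "\<forall>i\<in>V. card {j\<in>V. D' i j} = m"
    proof
      fix i assume i: "i \<in> V"
      have "{j\<in>V. D' i j} = {j\<in>V. D i j} - {\<sigma>0 i}" by (auto simp: D'_def)
      moreover have "\<sigma>0 i \<in> {j\<in>V. D i j}" using s0 i permutes_in_image by fastforce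
      ultimately show "card {j\<in>V. D' i j} = m" using h i V by simp
    qed
    have c': "\<forall>j\<in>V. card {i\<in>V. D' i j} = m"
    proof
      fix j assume j: "j \<in> V"
      have eq: "\<sigma>0 i = j \<longleftrightarrow> i = inv \<sigma>0 j" for i
        using permutes_inverses[OF s0(1)] by auto
      have "{i\<in>V. D' i j} = {i\<in>V. D i j} - {inv \<sigma>0 j}" using eq by (auto simp: D'_def)
      moreover have iv: "inv \<sigma>0 j \<in> V" using j permutes_inv[OF s0(1)] permutes_in_image by fastforce
      moreover have "D (inv \<sigma>0 j) (\<sigma>0 (inv \<sigma>0 j))" using s0(2) iv by blast
      then have "D (inv \<sigma>0 j) j" by (simp add: permutes_inverses(1)[OF s0(1)])
      ultimately show "card {i\<in>V. D' i j} = m" using h j V by simp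
    qed
    obtain \<sigma>' where s': "\<forall>t<m. \<sigma>' t permutes V"
      "\<forall>i\<in>V. \<forall>j\<in>V. (D' i j \<longrightarrow> (\<exists>!t. t<m \<and> \<sigma>' t i = j)) \<and> (\<not> D' i j \<longrightarrow> (\<forall>t<m. \<sigma>' t i \<noteq> j))"
      using Suc.IH[rule_format, OF conjI[OF r' c']] by (elim exE conjE) blast
    define \<sigma> where "\<sigma> t = (if t = m then \<sigma>0 else \<sigma>' t)" for t
    have p: "\<forall>t<Suc m. \<sigma> t permutes V"
    proof (intro allI impI)
      fix t assume "t < Suc m"
      then show "\<sigma> t permutes V" by (cases "t = m") (simp_all add: \<sigma>_def s0(1) s'(1))
    qed
    have q: "\<forall>i\<in>V. \<forall>j\<in>V. (D i j \<longrightarrow> (\<exists>!t. t<Suc m \<and> \<sigma> t i = j)) \<and> (\<not> D i j \<longrightarrow> (\<forall>t<Suc m. \<sigma> t i \<noteq> j))"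
    proof (intro ballI conjI impI)
      fix i j assume ij: "i \<in> V" "j \<in> V"
      note sij = s'(2)[rule_format, OF ij]
      {
        assume Dij: "D i j"
        show "\<exists>!t. t<Suc m \<and> \<sigma> t i = j"
        proof (cases "\<sigma>0 i = j")
          case True
          then have "\<not> D' i j" by (simp add: D'_def)
          then have nn: "\<forall>t<m. \<sigma>' t i \<noteq> j" using conjunct2[OF sij] by blast
          show ?thesis
          proof (rule ex1I[of _ m])
            show "m < Suc m \<and> \<sigma> m i = j" using True by (simp add: \<sigma>_def)
            fix t assume "t < Suc m \<and> \<sigma> t i = j"
            then show "t = m" using nn by (cases "t = m") (auto simp: \<sigma>_def less_Suc_eq)
          qed
        next
          case False
          then have "D' i j" using Dij by (simp add: D'_def)
          then have "\<exists>!t. t<m \<and> \<sigma>' t i = j" using conjunct1[OF sij] by blast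
          then obtain t where t: "t<m" "\<sigma>' t i = j" and tu: "\<And>u. u<m \<and> \<sigma>' u i = j \<Longrightarrow> u = t"
            by (elim ex1E) blast
          show ?thesis
          proof (rule ex1I[of _ t])
            show "t < Suc m \<and> \<sigma> t i = j" using t by (simp add: \<sigma>_def)
            fix u assume u: "u < Suc m \<and> \<sigma> u i = j"
            show "u = t"
            proof (cases "u = m")
              case True then show ?thesis using u False by (simp add: \<sigma>_def)
            next
              case F2: False then show ?thesis using u tu by (simp add: \<sigma>_def)
            qed
          qed
        qed
      }
      {
        assume nD: "\<not> D i j"
        have a1: "\<sigma>0 i \<noteq> j" using s0(2) ij nD by blast
        have "\<not> D' i j" using nD by (simp add: D'_def)
        then have a2: "\<forall>t<m. \<sigma>' t i \<noteq> j" using conjunct2[OF sij] by blast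
        show "\<forall>t<Suc m. \<sigma> t i \<noteq> j"
        proof (intro allI impI)
          fix t assume "t < Suc m"
          then show "\<sigma> t i \<noteq> j" using a1 a2 by (cases "t = m") (simp_all add: \<sigma>_def)
        qed
      }
    qed
    show "\<exists>\<sigma>::nat \<Rightarrow> 'a \<Rightarrow> 'a. (\<forall>t<Suc m. \<sigma> t permutes V) \<and>
       (\<forall>i\<in>V. \<forall>j\<in>V. (D i j \<longrightarrow> (\<exists>!t. t<Suc m \<and> \<sigma> t i = j)) \<and> (\<not> D i j \<longrightarrow> (\<forall>t<Suc m. \<sigma> t i \<noteq> j)))"
      by (rule exI[of _ \<sigma>]) (use p q in blast)
  qed
qed



lemma pow_list: "(\<forall>i<length ys. ys!i = (-1::int)^i) \<Longrightarrow> ys = map (\<lambda>i. (-1)^i) [0..<length ys]"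
  by (intro nth_equalityI) auto

lemma pow_sum: "sum_list (map (\<lambda>i. (-1::int)^i) [0..<L]) = (if odd L then 1 else 0)"
  by (induction L) auto

lemma sum_filter_nz: "sum_list (filter (\<lambda>x. x\<noteq>0) xs) = sum_list (xs::int list)"
  by (induction xs) auto

lemma osa_sum: "one_star_alt xs \<Longrightarrow> sum_list xs = (if odd (length (filter (\<lambda>x. x\<noteq>0) xs)) then 1 else 0)"
proof -
  assume "one_star_alt xs"
  then have "\<forall>i<length (filter (\<lambda>x. x\<noteq>0) xs). (filter (\<lambda>x. x\<noteq>0) xs)!i = (-1::int)^i"
    by (simp add: one_star_alt_def Let_def)
  then have "filter (\<lambda>x. x\<noteq>0) xs = map (\<lambda>i. (-1)^i) [0..<length (filter (\<lambda>x. x\<noteq>0) xs)]"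
    by (rule pow_list)
  then have "sum_list (filter (\<lambda>x. x\<noteq>0) xs) = (if odd (length (filter (\<lambda>x. x\<noteq>0) xs)) then 1 else 0)"
    by (metis pow_sum)
  then show ?thesis by (simp add: sum_filter_nz)
qed

lemma asv_sum: "alt_sign_vec xs \<Longrightarrow> sum_list xs = 1"
proof -
  assume a: "alt_sign_vec xs"
  define ys where "ys = filter (\<lambda>x. x\<noteq>0) xs"
  have o: "one_star_alt xs" and ne: "ys \<noteq> []" and l: "last ys = 1" using a by (auto simp: alt_sign_vec_def ys_def Let_def)
  have p: "\<forall>i<length ys. ys!i = (-1::int)^i" using o by (simp add: one_star_alt_def Let_def ys_def)
  have "last ys = ys ! (length ys - 1)" using ne by (simp add: last_conv_nth)
  also have "\<dots> = (-1)^(length ys - 1)" using p ne by simp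
  finally have "(-1::int)^(length ys - 1) = 1" using l by simp
  then have "even (length ys - 1)" by (metis neg_one_odd_power one_neq_neg_one)
  moreover have "length ys > 0" using ne by simp
  ultimately have "odd (length ys)" by (metis One_nat_def Suc_pred even_Suc)
  then show ?thesis using osa_sum[OF o] ys_def by simp
qed

lemma filter_ind: "filter (\<lambda>x. x \<noteq> 0) (map (\<lambda>x. if P x then (1::int) else 0) xs) = map (\<lambda>_. 1) (filter P xs)"
  by (induction xs) auto

lemma filter_single: "distinct xs \<Longrightarrow> {x\<in>set xs. P x} = {a} \<Longrightarrow> filter P xs = [a]"
proof -
  assume d: "distinct xs" and s: "{x\<in>set xs. P x} = {a}"
  have d2: "distinct (filter P xs)" using d by simp
  have s2: "set (filter P xs) = {a}" using s by auto
  have "length (filter P xs) = 1" using distinct_card[OF d2] s2 by simp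
  then obtain b where "filter P xs = [b]" by (metis One_nat_def length_0_conv length_Suc_conv)
  then show ?thesis using s2 by simp
qed

lemma asv_of_filter1: "sign_entries xs \<Longrightarrow> filter (\<lambda>x. x\<noteq>0) xs = [1] \<Longrightarrow> alt_sign_vec xs"
  by (simp add: alt_sign_vec_def one_star_alt_def Let_def)

lemma ind_sign: "sign_entries (map (\<lambda>x. if P x then (1::int) else 0) xs)"
  by (auto simp: sign_entries_def)

lemma asv_ind: "distinct xs \<Longrightarrow> {x\<in>set xs. P x} = {a} \<Longrightarrow> alt_sign_vec (map (\<lambda>x. if P x then (1::int) else 0) xs)"
  by (rule asv_of_filter1[OF ind_sign]) (simp add: filter_ind filter_single)

lemma asv_append:
  assumes v: "one_star_alt v" and w: "sign_entries w"
    and f: "filter (\<lambda>x. x\<noteq>0) w = (if even (length (filter (\<lambda>x. x\<noteq>0) v)) then [1] else [])"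
  shows "alt_sign_vec (v @ w)"
proof -
  define ys where "ys = filter (\<lambda>x. x\<noteq>0) v"
  have p: "\<forall>i<length ys. ys!i = (-1::int)^i" using v by (simp add: one_star_alt_def Let_def ys_def)
  have se: "sign_entries (v @ w)" using v w by (auto simp: sign_entries_def one_star_alt_def)
  show ?thesis
  proof (cases "even (length ys)")
    case True
    then have fw: "filter (\<lambda>x. x\<noteq>0) (v @ w) = ys @ [1]" using f ys_def by simp
    have "\<forall>i<length (ys @ [1]). (ys @ [1])!i = (-1::int)^i"
    proof (intro allI impI)
      fix i assume "i < length (ys @ [1])"
      then have "i < length ys \<or> i = length ys" by auto
      then show "(ys @ [1])!i = (-1::int)^i"
        using p True by (auto simp: nth_append)
    qed
    then show ?thesis using se fw by (simp add: alt_sign_vec_def one_star_alt_def Let_def)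
  next
    case False
    then have fw: "filter (\<lambda>x. x\<noteq>0) (v @ w) = ys" using f ys_def by simp
    have ne: "ys \<noteq> []" using False by auto
    have "last ys = ys ! (length ys - 1)" using ne by (simp add: last_conv_nth)
    also have "\<dots> = (-1)^(length ys - 1)" using p ne by simp
    also have "\<dots> = 1" using False ne by (simp add: neg_one_even_power)
    finally have "last ys = 1" .
    then show ?thesis using se fw ne p by (simp add: alt_sign_vec_def one_star_alt_def Let_def)
  qed
qed



lemma sum_upt_eq: "sum_list (map f [1..<k+1]) = sum f {1..(k::nat)}"
  by (metis atLeastLessThanSuc_atLeastAtMost Suc_eq_plus1 set_upt sum_set_upt_conv_sum_list_nat)

lemma card_ind: "finite V \<Longrightarrow> (\<Sum>j\<in>V. if P j then 1 else 0 :: int) = int (card {j\<in>V. P j})"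
  by (simp add: sum.inter_filter[symmetric])

lemma line_count:
  fixes F :: "nat \<Rightarrow> nat \<Rightarrow> int" and L :: "nat \<Rightarrow> nat"
  assumes osa: "\<forall>j\<in>{1..n}. sum_list (map (\<lambda>s. F s j) [1..<k+1]) = (if odd (L j) then 1 else 0)"
    and asv: "\<forall>s\<in>{1..k}. sum_list (map (\<lambda>j. F s j) [1..<n+1]) = 1"
    and kn: "k \<le> n"
  shows "card {j\<in>{1..n}. even (L j)} = n - k"
proof -
  have osa': "\<forall>j\<in>{1..n}. (\<Sum>s\<in>{1..k}. F s j) = (if odd (L j) then 1 else 0)"
    using osa by (simp only: sum_upt_eq)
  have asv': "\<forall>s\<in>{1..k}. (\<Sum>j\<in>{1..n}. F s j) = 1"
    using asv by (simp only: sum_upt_eq)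
  have "int (card {j\<in>{1..n}. odd (L j)}) = (\<Sum>j\<in>{1..n}. if odd (L j) then 1 else 0)"
    by (simp add: card_ind)
  also have "\<dots> = (\<Sum>j\<in>{1..n}. \<Sum>s\<in>{1..k}. F s j)"
    using osa' by (intro sum.cong) auto
  also have "\<dots> = (\<Sum>s\<in>{1..k}. \<Sum>j\<in>{1..n}. F s j)" by (rule sum.swap)
  also have "\<dots> = (\<Sum>s\<in>{1..k}. 1)"
    using asv' by (intro sum.cong) auto
  finally have c: "card {j\<in>{1..n}. odd (L j)} = k" by simp
  have "{j\<in>{1..n}. even (L j)} = {1..n} - {j\<in>{1..n}. odd (L j)}" by auto
  moreover have "card ({1..n} - {j\<in>{1..n}. odd (L j)}) = card {1..n} - card {j\<in>{1..n}. odd (L j)}"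
    by (rule card_Diff_subset) auto
  ultimately have "card {j\<in>{1..n}. even (L j)} = card {1..n} - card {j\<in>{1..n}. odd (L j)}"
    by simp
  then show ?thesis using c by simp
qed

theorem mainTheorem11:
  fixes n k :: nat and A :: "nat \<Rightarrow> nat \<Rightarrow> nat \<Rightarrow> int"
  assumes "k < n"
    and "\<forall>s\<in>{1..k}. is_ASM n (A s)"
    and "\<forall>i\<in>{1..n}. \<forall>j\<in>{1..n}. one_star_alt (map (\<lambda>s. A s i j) [1..<k+1])"
  shows "\<exists>B :: nat \<Rightarrow> nat \<Rightarrow> nat \<Rightarrow> int.
           (\<forall>s\<in>{1..k}. \<forall>i\<in>{1..n}. \<forall>j\<in>{1..n}. B s i j = A s i j) \<and>
           (\<forall>s\<in>{k+1..n}. is_perm_matrix n (B s)) \<and>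
           is_ASHM n B"
proof -
  note kn = assms(1)
  define V where "V = {1..n}"
  have finV: "finite V" by (simp add: V_def)
  define L where "L i j = length (filter (\<lambda>x. x \<noteq> 0) (map (\<lambda>s. A s i j) [1..<k+1]))" for i j
  define D where "D i j = even (L i j)" for i j
  have osa: "\<forall>i\<in>V. \<forall>j\<in>V. sum_list (map (\<lambda>s. A s i j) [1..<k+1]) = (if odd (L i j) then 1 else 0)"
    using assms(3) osa_sum by (simp add: V_def L_def)
  have rows: "\<forall>i\<in>V. card {j\<in>V. D i j} = n - k"
  proof
    fix i assume i: "i \<in> V"
    have "card {j\<in>{1..n}. even (L i j)} = n - k"
    proof (rule line_count[where F = "\<lambda>s j. A s i j"])
      show "\<forall>j\<in>{1..n}. sum_list (map (\<lambda>s. A s i j) [1..<k+1]) = (if odd (L i j) then 1 else 0)"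
        using osa i V_def by blast
      show "\<forall>s\<in>{1..k}. sum_list (map (\<lambda>j. A s i j) [1..<n+1]) = 1"
      proof
        fix s assume s: "s \<in> {1..k}"
        then have "alt_sign_vec (row (A s) n i)" using assms(2) i by (simp add: V_def is_ASM_def)
        then have "sum_list (row (A s) n i) = 1" by (rule asv_sum)
        then show "sum_list (map (\<lambda>j. A s i j) [1..<n+1]) = 1" by (simp only: row_def)
      qed
    qed (use kn in simp)
    then show "card {j\<in>V. D i j} = n - k" by (simp add: V_def D_def)
  qed
  have cols: "\<forall>j\<in>V. card {i\<in>V. D i j} = n - k"
  proof
    fix j assume j: "j \<in> V"
    have "card {i\<in>{1..n}. even (L i j)} = n - k"
    proof (rule line_count[where F = "\<lambda>s i. A s i j"])
      show "\<forall>i\<in>{1..n}. sum_list (map (\<lambda>s. A s i j) [1..<k+1]) = (if odd (L i j) then 1 else 0)"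
        using osa j V_def by blast
      show "\<forall>s\<in>{1..k}. sum_list (map (\<lambda>i. A s i j) [1..<n+1]) = 1"
      proof
        fix s assume s: "s \<in> {1..k}"
        then have "alt_sign_vec (col (A s) n j)" using assms(2) j by (simp add: V_def is_ASM_def)
        then have "sum_list (col (A s) n j) = 1" by (rule asv_sum)
        then show "sum_list (map (\<lambda>i. A s i j) [1..<n+1]) = 1" by (simp only: col_def)
      qed
    qed (use kn in simp)
    then show "card {i\<in>V. D i j} = n - k" by (simp add: V_def D_def)
  qed
  obtain \<sigma> :: "nat \<Rightarrow> nat \<Rightarrow> nat" where sp: "\<forall>t<n-k. \<sigma> t permutes V"
    and sd: "\<forall>i\<in>V. \<forall>j\<in>V. (D i j \<longrightarrow> (\<exists>!t. t<n-k \<and> \<sigma> t i = j)) \<and> (\<not> D i j \<longrightarrow> (\<forall>t<n-k. \<sigma> t i \<noteq> j))"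
    using decomp[OF finV, rule_format, OF conjI[OF rows cols]] by (elim exE conjE) blast
  define B where "B s i j = (if s \<le> k then A s i j else if \<sigma> (s - k - 1) i = j then 1 else (0::int))" for s i j
  have P1: "\<forall>s\<in>{1..k}. \<forall>i\<in>{1..n}. \<forall>j\<in>{1..n}. B s i j = A s i j" by (simp add: B_def)
  have P2: "\<forall>s\<in>{k+1..n}. is_perm_matrix n (B s)"
  proof
    fix s assume s: "s \<in> {k+1..n}"
    then have "s - k - 1 < n - k" by auto
    then have "\<sigma> (s - k - 1) permutes {1..n}" using sp V_def by simp
    moreover have "\<forall>i\<in>{1..n}. \<forall>j\<in>{1..n}. B s i j = (if \<sigma> (s - k - 1) i = j then 1 else 0)"
      using s by (simp add: B_def)
    ultimately show "is_perm_matrix n (B s)" unfolding is_perm_matrix_def by blast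
  qed
  have H1: "\<forall>i\<in>{1..n}. \<forall>j\<in>{1..n}. alt_sign_vec (map (\<lambda>s. B s i j) [1..<n+1])"
  proof (intro ballI)
    fix i j assume i: "i \<in> {1..n}" and j: "j \<in> {1..n}"
    define v where "v = map (\<lambda>s. A s i j) [1..<k+1]"
    define w where "w = map (\<lambda>s. if \<sigma> (s - k - 1) i = j then 1 else (0::int)) [k+1..<n+1]"
    have split: "[1..<n+1] = [1..<k+1] @ [k+1..<n+1]"
      using upt_add_eq_append[of 1 "k+1" "n-k"] kn by simp
    have eq: "map (\<lambda>s. B s i j) [1..<n+1] = v @ w"
      unfolding split v_def w_def by (simp add: B_def)
    have fw: "filter (\<lambda>x. x\<noteq>0) w = (if even (length (filter (\<lambda>x. x\<noteq>0) v)) then [1] else [])"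
    proof (cases "D i j")
      case True
      then have "\<exists>!t. t<n-k \<and> \<sigma> t i = j" using sd i j V_def by blast
      then obtain t where t: "t<n-k" "\<sigma> t i = j" and tu: "\<And>u. u<n-k \<and> \<sigma> u i = j \<Longrightarrow> u = t"
        by (elim ex1E) blast
      have "{s\<in>set [k+1..<n+1]. \<sigma> (s - k - 1) i = j} = {t+k+1}"
      proof (intro equalityI subsetI)
        fix s assume "s \<in> {s\<in>set [k+1..<n+1]. \<sigma> (s - k - 1) i = j}"
        then have "s - k - 1 < n - k" "\<sigma> (s - k - 1) i = j" "k+1 \<le> s" by auto
        then have "s - k - 1 = t" using tu by blast
        then show "s \<in> {t+k+1}" using \<open>k+1 \<le> s\<close> by simp
      next
        fix s assume "s \<in> {t+k+1}"
        then show "s \<in> {s\<in>set [k+1..<n+1]. \<sigma> (s - k - 1) i = j}" using t by auto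
      qed
      then have "filter (\<lambda>s. \<sigma> (s - k - 1) i = j) [k+1..<n+1] = [t+k+1]"
        by (intro filter_single) auto
      then show ?thesis using True by (simp add: w_def filter_ind D_def L_def v_def)
    next
      case False
      then have "\<forall>t<n-k. \<sigma> t i \<noteq> j" using sd i j V_def by blast
      then have nt: "\<forall>t<n-k. \<sigma> t i \<noteq> j" .
      have "\<forall>s\<in>set [k+1..<n+1]. \<not> \<sigma> (s - k - 1) i = j"
      proof
        fix s assume "s \<in> set [k+1..<n+1]"
        then have "s - k - 1 < n - k" by auto
        then show "\<not> \<sigma> (s - k - 1) i = j" using nt by blast
      qed
      then have "filter (\<lambda>s. \<sigma> (s - k - 1) i = j) [k+1..<n+1] = []"
        by (subst filter_empty_conv) assumption
      then show ?thesis using False by (simp add: w_def filter_ind D_def L_def v_def)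
    qed
    have "alt_sign_vec (v @ w)"
      by (rule asv_append[OF _ _ fw]) (use assms(3) i j in \<open>simp_all add: v_def w_def ind_sign\<close>)
    then show "alt_sign_vec (map (\<lambda>s. B s i j) [1..<n+1])" using eq by simp
  qed
  have H2: "\<forall>i\<in>{1..n}. \<forall>s\<in>{1..n}. alt_sign_vec (map (\<lambda>j. B s i j) [1..<n+1])"
  proof (intro ballI)
    fix i s assume i: "i \<in> {1..n}" and s: "s \<in> {1..n}"
    show "alt_sign_vec (map (\<lambda>j. B s i j) [1..<n+1])"
    proof (cases "s \<le> k")
      case True
      then show ?thesis using assms(2) i s by (simp add: B_def is_ASM_def row_def)
    next
      case False
      define t where "t = s - k - 1"
      have tp: "\<sigma> t permutes V" using sp False s t_def by auto
      have a: "\<sigma> t i \<in> {1..n}" using tp i V_def permutes_in_image by fastforce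
      have m: "map (\<lambda>j. B s i j) [1..<n+1] = map (\<lambda>j. if \<sigma> t i = j then 1 else 0) [1..<n+1]"
        using False by (simp add: B_def t_def)
      have "alt_sign_vec (map (\<lambda>j. if \<sigma> t i = j then 1 else 0) [1..<n+1])"
        by (rule asv_ind[where a = "\<sigma> t i"]) (use a in auto)
      then show ?thesis by (simp only: m)
    qed
  qed
  have H3: "\<forall>j\<in>{1..n}. \<forall>s\<in>{1..n}. alt_sign_vec (map (\<lambda>i. B s i j) [1..<n+1])"
  proof (intro ballI)
    fix j s assume j: "j \<in> {1..n}" and s: "s \<in> {1..n}"
    show "alt_sign_vec (map (\<lambda>i. B s i j) [1..<n+1])"
    proof (cases "s \<le> k")
      case True
      then show ?thesis using assms(2) j s by (simp add: B_def is_ASM_def col_def)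
    next
      case False
      define t where "t = s - k - 1"
      have tp: "\<sigma> t permutes V" using sp False s t_def by auto
      have tpi: "inv (\<sigma> t) permutes V" by (rule permutes_inv[OF tp])
      have a: "inv (\<sigma> t) j \<in> {1..n}" using permutes_in_image[OF tpi] j V_def by simp
      have eqi: "\<sigma> t i = j \<longleftrightarrow> i = inv (\<sigma> t) j" for i
        using permutes_inverses[OF tp] by auto
      have m: "map (\<lambda>i. B s i j) [1..<n+1] = map (\<lambda>i. if \<sigma> t i = j then 1 else 0) [1..<n+1]"
        using False by (simp add: B_def t_def)
      have "alt_sign_vec (map (\<lambda>i. if \<sigma> t i = j then 1 else 0) [1..<n+1])"
      proof (rule asv_ind[where a = "inv (\<sigma> t) j"])
        show "{x \<in> set [1..<n + 1]. \<sigma> t x = j} = {inv (\<sigma> t) j}"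
          using a by (simp only: eqi) auto
      qed simp
      then show ?thesis by (simp only: m)
    qed
  qed
  have "is_ASHM n B" unfolding is_ASHM_def by (intro conjI H1 H2 H3)
  then show ?thesis by (intro exI[of _ B] conjI P1 P2)
qed

end
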